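(* Let $\Omega\subset\mathbb{R}^N$ be a bounded domain with Lipschitz boundary, let $1<q<p$ with $N<p$. Assume: (H1) $g:\mathbb{R}\to[a_0,+\infty)$ is continuous, with $a_0>0$; (H2) $f:\Omega\times\mathbb{R}\times\mathbb{R}^N\to\mathbb{R}$ is a Carath\'eodory function and there exist a nonnegative $\sigma\in L^{r_1}(\Omega)$, constants $b,c\ge 0$ and $r_1,r_2\ge1$ with $|f(x,s,\xi)|\le\sigma(x)+b|s|^{r_2}+c|\xi|^{p-1}$ for a.e. $x\in\Omega$ and all $s\in\mathbb{R}$, $\xi\in\mathbb{R}^N$; (H3) there exist constants $c_0<a_0$, $c_1>0$ and $\alpha\in[1,p)$ with $f(x,s,\xi)s\le c_0|\xi|^p+c_1(|s|^\alpha+1)$ for a.e. $x\in\Omega$ and all $s\in\mathbb{R}$, $\xi\in\mathbb{R}^N$. Then there exist constants $R,R_1>0$ such that every weak solution $u\in W_0^{1,p}(\Omega)$ of $$-\operatorname{div}\big(g(u)|\nabla u|^{p-2}\nabla u\big)+\operatorname{div}\big(|\nabla u|^{q-2}\nabla u\big)=f(x,u,\nabla u)\ \text{in }\Omega,\qquad u=0\ \text{on }\partial\Omega$$ satisfies $\|u\|_{W_0^{1,p}(\Omega)}\le R_1$ and $\|u\|_{C(\overline\Omega)}\le R$.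
   Context: $W_0^{1,p}(\Omega)$ carries the norm $\|\nabla\cdot\|_{L^p(\Omega)}$; since $p>N$ it embeds continuously in $C(\overline\Omega)$. A weak solution is $u\in W_0^{1,p}(\Omega)$ such that for all $v\in W_0^{1,p}(\Omega)$: $$\int_\Omega g(u)|\nabla u|^{p-2}\nabla u\cdot\nabla v\,dx-\int_\Omega|\nabla u|^{q-2}\nabla u\cdot\nabla v\,dx=\int_\Omega f(x,u,\nabla u)v\,dx.$$ *)

theory Defs
  imports "HOL-Analysis.Analysis"
begin

text \<open>Omega is locally (near each boundary point) the strict epigraph of a Lipschitz
 function defined on the hyperplane orthogonal to some unit direction e.\<close>
definition lipschitz_boundary :: "'a::euclidean_space set \<Rightarrow> bool" where
  "lipschitz_boundary \<Omega> \<longleftrightarrow>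
     (\<forall>x0\<in>frontier \<Omega>. \<exists>r>0. \<exists>e. norm e = 1 \<and> (\<exists>\<gamma> L.
        (\<forall>y z. y \<bullet> e = 0 \<longrightarrow> z \<bullet> e = 0 \<longrightarrow> \<bar>\<gamma> y - \<gamma> z\<bar> \<le> L * norm (y - z)) \<and>
        \<Omega> \<inter> ball x0 r = {x \<in> ball x0 r. \<gamma> (x - (x \<bullet> e) *\<^sub>R e) < x \<bullet> e}))"

definition bounded_lipschitz_domain :: "'a::euclidean_space set \<Rightarrow> bool" where
  "bounded_lipschitz_domain \<Omega> \<longleftrightarrow>
     open \<Omega> \<and> connected \<Omega> \<and> \<Omega> \<noteq> {} \<and> bounded \<Omega> \<and> lipschitz_boundary \<Omega>"

fun dderiv :: "'a::euclidean_space list \<Rightarrow> ('a \<Rightarrow> real) \<Rightarrow> 'a \<Rightarrow> real" where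
  "dderiv [] \<phi> = \<phi>"
| "dderiv (v # vs) \<phi> = (\<lambda>x. frechet_derivative (dderiv vs \<phi>) (at x) v)"

definition smooth_fun :: "('a::euclidean_space \<Rightarrow> real) \<Rightarrow> bool" where
  "smooth_fun \<phi> \<longleftrightarrow> (\<forall>vs x. dderiv vs \<phi> differentiable (at x))"

definition test_fun :: "'a::euclidean_space set \<Rightarrow> ('a \<Rightarrow> real) \<Rightarrow> bool" where
  "test_fun \<Omega> \<phi> \<longleftrightarrow> smooth_fun \<phi> \<and> compact (closure {x. \<phi> x \<noteq> 0})
      \<and> closure {x. \<phi> x \<noteq> 0} \<subseteq> \<Omega>"

definition grad :: "('a::euclidean_space \<Rightarrow> real) \<Rightarrow> 'a \<Rightarrow> 'a" where
  "grad \<phi> x = (\<Sum>i\<in>Basis. frechet_derivative \<phi> (at x) i *\<^sub>R i)"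

text \<open>W01p Omega p u Du: u belongs to W_0^{1,p}(Omega) (closure of C_c^infinity(Omega)
  in the W^{1,p} norm) and Du is its weak gradient.\<close>
definition W01p :: "'a::euclidean_space set \<Rightarrow> real \<Rightarrow> ('a \<Rightarrow> real) \<Rightarrow> ('a \<Rightarrow> 'a) \<Rightarrow> bool" where
  "W01p \<Omega> p u Du \<longleftrightarrow>
     u \<in> borel_measurable lebesgue \<and> Du \<in> borel_measurable lebesgue \<and>
     set_integrable lebesgue \<Omega> (\<lambda>x. \<bar>u x\<bar> powr p) \<and>
     set_integrable lebesgue \<Omega> (\<lambda>x. norm (Du x) powr p) \<and>
     (\<exists>\<phi>. (\<forall>k. test_fun \<Omega> (\<phi> k)) \<and>
        (\<lambda>k. LINT x:\<Omega>|lebesgue. \<bar>\<phi> k x - u x\<bar> powr p) \<longlonglongrightarrow> 0 \<and>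
        (\<lambda>k. LINT x:\<Omega>|lebesgue. norm (grad (\<phi> k) x - Du x) powr p) \<longlonglongrightarrow> 0)"

definition W01p_norm :: "'a::euclidean_space set \<Rightarrow> real \<Rightarrow> ('a \<Rightarrow> 'a) \<Rightarrow> real" where
  "W01p_norm \<Omega> p Du = (LINT x:\<Omega>|lebesgue. norm (Du x) powr p) powr (1 / p)"

definition weak_solution ::
  "'a::euclidean_space set \<Rightarrow> real \<Rightarrow> real \<Rightarrow> (real \<Rightarrow> real) \<Rightarrow> ('a \<Rightarrow> real \<Rightarrow> 'a \<Rightarrow> real)
    \<Rightarrow> ('a \<Rightarrow> real) \<Rightarrow> ('a \<Rightarrow> 'a) \<Rightarrow> bool" where
  "weak_solution \<Omega> p q g f u Du \<longleftrightarrow> W01p \<Omega> p u Du \<and>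
     (\<forall>v Dv. W01p \<Omega> p v Dv \<longrightarrow>
        (LINT x:\<Omega>|lebesgue. g (u x) * norm (Du x) powr (p - 2) * (Du x \<bullet> Dv x))
        - (LINT x:\<Omega>|lebesgue. norm (Du x) powr (q - 2) * (Du x \<bullet> Dv x))
        = (LINT x:\<Omega>|lebesgue. f x (u x) (Du x) * v x))"

definition caratheodory ::
  "'a::euclidean_space set \<Rightarrow> ('a \<Rightarrow> real \<Rightarrow> 'a \<Rightarrow> real) \<Rightarrow> bool" where
  "caratheodory \<Omega> f \<longleftrightarrow>
     (\<forall>s \<xi>. (\<lambda>x. f x s \<xi>) \<in> borel_measurable (restrict_space lebesgue \<Omega>)) \<and>
     (AE x in lebesgue. x \<in> \<Omega> \<longrightarrow> continuous_on UNIV (\<lambda>(s, \<xi>). f x s \<xi>))"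

end

theory Submission
  imports Defs
begin


lemma young_lin:
  fixes G lam p :: real
  assumes G: "G \<ge> 0" and lam: "lam > 0" and p: "p > 1"
  shows "G \<le> lam powr (1 - p) * G powr p + lam"
proof (cases "G \<le> lam")
  case True
  have "0 \<le> lam powr (1 - p) * G powr p" by simp
  then show ?thesis using True by linarith
next
  case False
  then have Gp: "G > 0" using lam by simp
  have "G powr p = G * G powr (p - 1)"
    using Gp by (simp add: powr_diff powr_one field_simps)
  have "1 \<le> (G / lam) powr (p - 1)"
    using False lam p by (intro ge_one_powr_ge_zero) auto
  also have "(G / lam) powr (p - 1) = lam powr (1 - p) * G powr (p - 1)"
    using Gp lam by (simp add: powr_divide powr_minus_divide[symmetric] divide_powr_uminus powr_minus field_simps)
  finally have "G \<le> G * (lam powr (1 - p) * G powr (p - 1))"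
    using Gp mult_left_mono[of 1 "lam powr (1 - p) * G powr (p - 1)" G] by simp
  also have "\<dots> = lam powr (1 - p) * G powr p"
    using \<open>G powr p = G * G powr (p - 1)\<close> by simp
  finally show ?thesis using lam by simp
qed

lemma young_pow:
  fixes a b eta t :: real
  assumes a: "0 < a" and ab: "a < b" and eta: "eta > 0" and t: "t \<ge> 0"
  shows "t powr a \<le> eta * t powr b + eta powr (- a / (b - a))"
proof (cases "t = 0")
  case True then show ?thesis using a ab eta by simp
next
  case False
  then have tp: "t > 0" using t by simp
  show ?thesis
  proof (cases "eta * t powr (b - a) \<ge> 1")
    case True
    have "t powr a \<le> eta * t powr (b - a) * t powr a" using True tp
      by (simp add: mult_le_cancel_right1)
    also have "\<dots> = eta * t powr b" using tp by (simp add: powr_add[symmetric])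
    finally show ?thesis by (smt (verit) powr_ge_zero)
  next
    case False
    then have "t powr (b - a) < 1 / eta" using eta by (simp add: field_simps)
    then have "(t powr (b - a)) powr (a / (b - a)) < (1 / eta) powr (a / (b - a))"
      using a ab tp by (intro powr_less_mono2) auto
    also have "(t powr (b - a)) powr (a / (b - a)) = t powr a"
      using ab by (simp add: powr_powr)
    also have "(1 / eta) powr (a / (b - a)) = eta powr (- a / (b - a))"
      using eta by (simp add: powr_divide powr_minus_divide)
    finally show ?thesis using eta by (smt (verit) mult_nonneg_nonneg powr_ge_zero)
  qed
qed



lemma tf_diff: "test_fun \<Omega> \<phi> \<Longrightarrow> \<phi> differentiable (at x)"
  unfolding test_fun_def smooth_fun_def
  by (metis dderiv.simps(1))

lemma tf_deriv: "test_fun \<Omega> \<phi> \<Longrightarrow> (\<phi> has_derivative frechet_derivative \<phi> (at x)) (at x)"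
  using tf_diff frechet_derivative_works by blast

lemma tf_cont: "test_fun \<Omega> \<phi> \<Longrightarrow> continuous_on UNIV \<phi>"
  by (meson continuous_at_imp_continuous_on differentiable_imp_continuous_within tf_diff)

lemma tf_cont_fd: "test_fun \<Omega> \<phi> \<Longrightarrow> continuous_on UNIV (\<lambda>x. frechet_derivative \<phi> (at x) v)"
proof -
  assume "test_fun \<Omega> \<phi>"
  then have "\<And>x. dderiv [v] \<phi> differentiable (at x)"
    unfolding test_fun_def smooth_fun_def by blast
  then have "\<And>x. (\<lambda>x. frechet_derivative \<phi> (at x) v) differentiable (at x)" by simp
  then show ?thesis
    by (meson continuous_at_imp_continuous_on differentiable_imp_continuous_within)
qed

lemma grad_cont: "test_fun \<Omega> \<phi> \<Longrightarrow> continuous_on UNIV (grad \<phi>)"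
  unfolding grad_def[abs_def]
  by (intro continuous_on_sum continuous_on_scaleR tf_cont_fd continuous_on_const) auto

lemma grad_inner: assumes "test_fun \<Omega> \<phi>"
  shows "grad \<phi> x \<bullet> v = frechet_derivative \<phi> (at x) v"
proof -
  let ?L = "frechet_derivative \<phi> (at x)"
  have lin: "linear ?L" using tf_deriv[OF assms] has_derivative_linear by blast
  have "?L v = ?L (\<Sum>i\<in>Basis. (v \<bullet> i) *\<^sub>R i)" by (simp add: euclidean_representation)
  also have "\<dots> = (\<Sum>i\<in>Basis. (v \<bullet> i) * ?L i)"
    using lin by (simp add: linear_sum linear_scale)
  also have "\<dots> = grad \<phi> x \<bullet> v"
    unfolding grad_def inner_sum_left
  proof (intro sum.cong refl)
    fix i :: 'a
    have "(?L i *\<^sub>R i) \<bullet> v = ?L i * (i \<bullet> v)" by (rule inner_scaleR_left)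
    also have "\<dots> = (v \<bullet> i) * ?L i" by (simp only: inner_commute[of i v] mult.commute)
    finally show "(v \<bullet> i) * ?L i = (?L i *\<^sub>R i) \<bullet> v" by (rule sym)
  qed
  finally show ?thesis by simp
qed

lemma tf_zero_outside:
  assumes "test_fun \<Omega> \<phi>" "x \<notin> closure {x. \<phi> x \<noteq> 0}"
  shows "\<phi> x = 0" "grad \<phi> x = 0"
proof -
  show "\<phi> x = 0" using contra_subsetD[OF closure_subset assms(2)] by simp
  let ?S = "- closure {x. \<phi> x \<noteq> 0}"
  have S: "open ?S" "x \<in> ?S" using assms(2) by auto
  have eq: "\<And>z. z \<in> ?S \<Longrightarrow> (\<lambda>_. 0::real) z = \<phi> z"
  proof -
    fix z assume "z \<in> ?S"
    then have "z \<notin> closure {x. \<phi> x \<noteq> 0}" by simp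
    then have "z \<notin> {x. \<phi> x \<noteq> 0}" by (rule contra_subsetD[OF closure_subset])
    then show "(\<lambda>_. 0::real) z = \<phi> z" by simp
  qed
  have "((\<lambda>_. 0::real) has_derivative (\<lambda>_. 0)) (at x)" by (rule has_derivative_const)
  then have "(\<phi> has_derivative (\<lambda>_. 0)) (at x)"
    by (rule has_derivative_transform_within_open[OF _ S eq])
  then have "frechet_derivative \<phi> (at x) = (\<lambda>_. 0)" by (rule frechet_derivative_at[symmetric])
  then show "grad \<phi> x = 0" unfolding grad_def by simp
qed

lemma tf_bounded_fun:
  assumes "test_fun \<Omega> \<phi>" "continuous_on UNIV h" "\<And>x. x \<notin> closure {x. \<phi> x \<noteq> 0} \<Longrightarrow> h x = 0"
  shows "\<exists>B. \<forall>x. norm (h x :: 'b::real_normed_vector) \<le> B"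
proof -
  let ?K = "closure {x. \<phi> x \<noteq> 0}"
  have "compact ?K" using assms(1) unfolding test_fun_def by blast
  then have "compact (h ` ?K)" using assms(2) compact_continuous_image continuous_on_subset by blast
  then obtain B where B: "\<And>y. y \<in> h ` ?K \<Longrightarrow> norm y \<le> B"
    using compact_imp_bounded bounded_iff by metis
  show ?thesis
  proof (intro exI[of _ "max B 0"] allI)
    fix x show "norm (h x) \<le> max B 0"
      using B[of "h x"] assms(3)[of x] by (cases "x \<in> ?K") auto
  qed
qed

lemma tf_bounds:
  assumes "test_fun \<Omega> \<phi>"
  shows "\<exists>B. \<forall>x. \<bar>\<phi> x\<bar> \<le> B" "\<exists>B. \<forall>x. norm (grad \<phi> x) \<le> B"
proof -
  obtain B where "\<forall>x. norm (\<phi> x) \<le> B"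
    using tf_bounded_fun[OF assms tf_cont[OF assms]] tf_zero_outside(1)[OF assms] by blast
  then show "\<exists>B. \<forall>x. \<bar>\<phi> x\<bar> \<le> B" by auto
  show "\<exists>B. \<forall>x. norm (grad \<phi> x) \<le> B"
    using tf_bounded_fun[OF assms grad_cont[OF assms]] tf_zero_outside(2)[OF assms] by blast
qed



lemma nn_integral_scale:
  fixes f :: "'a::euclidean_space \<Rightarrow> ennreal" and x :: 'a and t :: real
  assumes f[measurable]: "f \<in> borel_measurable borel" and t: "t > 0"
  shows "(\<integral>\<^sup>+y. f (x + t *\<^sub>R (y - x)) \<partial>lborel) = ennreal (t powr - real DIM('a)) * (\<integral>\<^sup>+z. f z \<partial>lborel)"
proof -
  have eq: "\<And>y. (1 - t) *\<^sub>R x + t *\<^sub>R y = x + t *\<^sub>R (y - x)" by (simp add: algebra_simps)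
  have L: "lborel = density (distr lborel borel (\<lambda>y. (1 - t) *\<^sub>R x + t *\<^sub>R y)) (\<lambda>_. \<bar>t\<bar>^DIM('a))"
    using lborel_affine[of t "(1-t) *\<^sub>R x"] t by simp
  have "(\<integral>\<^sup>+z. f z \<partial>lborel) = (\<integral>\<^sup>+z. f z \<partial>density (distr lborel borel (\<lambda>y. (1 - t) *\<^sub>R x + t *\<^sub>R y)) (\<lambda>_. \<bar>t\<bar>^DIM('a)))"
    using L by (rule arg_cong)
  also have "\<dots> = (\<integral>\<^sup>+y. ennreal (\<bar>t\<bar>^DIM('a)) * f ((1 - t) *\<^sub>R x + t *\<^sub>R y) \<partial>lborel)"
    by (simp add: nn_integral_density nn_integral_distr)
  also have "\<dots> = ennreal (t^DIM('a)) * (\<integral>\<^sup>+y. f (x + t *\<^sub>R (y - x)) \<partial>lborel)"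
    using t by (simp add: eq nn_integral_cmult)
  finally have *: "(\<integral>\<^sup>+z. f z \<partial>lborel) = ennreal (t^DIM('a)) * (\<integral>\<^sup>+y. f (x + t *\<^sub>R (y - x)) \<partial>lborel)" .
  have one: "ennreal (t powr - real DIM('a)) * ennreal (t^DIM('a)) = 1"
  proof -
    have "t powr - real DIM('a) * t^DIM('a) = 1"
      using t by (simp add: powr_minus powr_realpow[symmetric] field_simps)
    then show ?thesis using t by (simp add: ennreal_mult[symmetric])
  qed
  show ?thesis unfolding * mult.assoc[symmetric] one by simp
qed

lemma ftc_segment:
  assumes tf: "test_fun \<Omega> \<phi>"
  shows "ennreal \<bar>\<phi> y - \<phi> x\<bar> \<le> (\<integral>\<^sup>+t. ennreal (norm (grad \<phi> (x + t *\<^sub>R (y - x))) * norm (y - x)) * indicator {0<..1} t \<partial>lborel)"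
proof -
  let ?g = "\<lambda>t::real. x + t *\<^sub>R (y - x)"
  let ?h = "\<lambda>t. \<phi> (?g t)"
  let ?h' = "\<lambda>t. grad \<phi> (?g t) \<bullet> (y - x)"
  let ?k = "\<lambda>t. norm (grad \<phi> (?g t)) * norm (y - x)"
  have der: "(?h has_vector_derivative ?h' t) (at t)" for t
  proof -
    have g: "(?g has_derivative (\<lambda>s. s *\<^sub>R (y - x))) (at t)"
      by (auto intro!: derivative_eq_intros)
    have "(?h has_derivative (\<lambda>s. frechet_derivative \<phi> (at (?g t)) (s *\<^sub>R (y - x)))) (at t)"
      using diff_chain_at[OF g tf_deriv[OF tf]] by (simp add: o_def)
    moreover have "(\<lambda>s. frechet_derivative \<phi> (at (?g t)) (s *\<^sub>R (y - x))) = (\<lambda>s. s *\<^sub>R ?h' t)"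
      by (simp add: grad_inner[OF tf, symmetric])
    ultimately show ?thesis unfolding has_vector_derivative_def by simp
  qed
  have ftc: "(?h' has_integral (?h 1 - ?h 0)) {0..1}"
    by (rule fundamental_theorem_of_calculus) (auto intro: has_vector_derivative_at_within der)
  have gc: "continuous_on UNIV (\<lambda>t. grad \<phi> (?g t))"
    by (rule continuous_on_compose2[OF grad_cont[OF tf]]) (auto intro!: continuous_intros)
  have ck: "continuous_on {0..1} ?k"
    by (intro continuous_on_mult_right continuous_on_norm continuous_on_subset[OF gc]) auto
  have intk: "?k integrable_on {0..1}"
    by (rule integrable_continuous_interval[OF ck])
  have inth': "?h' integrable_on {0..1}" using ftc by (rule has_integral_integrable)
  have I: "integral {0..1} ?h' = ?h 1 - ?h 0" by (rule integral_unique[OF ftc])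
  have "\<bar>\<phi> y - \<phi> x\<bar> = norm (integral {0..1} ?h')" unfolding I by simp
  also have "\<dots> \<le> integral {0..1} ?k"
    by (rule integral_norm_bound_integral[OF inth' intk]) (simp add: Cauchy_Schwarz_ineq2)
  finally have 1: "\<bar>\<phi> y - \<phi> x\<bar> \<le> integral {0..1} ?k" .
  have "(\<integral>\<^sup>+t. ennreal (?k t) * indicator {0<..1} t \<partial>lborel) = (\<integral>\<^sup>+t. ennreal (?k t) * indicator {0..1} t \<partial>lborel)"
    by (rule nn_integral_cong_AE) (use AE_lborel_singleton[of 0] in \<open>auto elim!: eventually_mono simp: indicator_def\<close>)
  also have "\<dots> = ennreal (integral {0..1} ?k)"
    by (rule nn_integral_has_integral_lebesgue'[OF _ integrable_integral[OF intk]]) simp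
  finally show ?thesis using 1 by (simp add: ennreal_leI)
qed



lemma powr_int_01:
  fixes s :: real assumes "0 < s" "s < 1"
  shows "(\<integral>\<^sup>+t. ennreal (t powr (- s)) * indicator {0<..1} t \<partial>lborel) = ennreal (1 / (1 - s))"
proof -
  have "(\<integral>\<^sup>+t. ennreal (t powr (- s)) * indicator {0<..1} t \<partial>lborel) = (\<integral>\<^sup>+t. ennreal (t powr (- s)) * indicator {0..1} t \<partial>lborel)"
    by (rule nn_integral_cong_AE) (use AE_lborel_singleton[of 0] in \<open>auto elim!: eventually_mono simp: indicator_def\<close>)
  also have "\<dots> = ennreal (1 powr (- s + 1) / (- s + 1))"
    by (rule nn_integral_has_integral_lebesgue'[OF _ has_integral_powr_from_0]) (use assms in auto)
  finally show ?thesis by simp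
qed

lemma morrey_test:
  fixes \<phi> :: "'a::euclidean_space \<Rightarrow> real" and \<Omega> :: "'a set"
  assumes tf: "test_fun \<Omega> \<phi>" and \<Omega>b: "\<Omega> \<subseteq> ball 0 \<rho>" and \<rho>: "\<rho> > 0" and pN: "real DIM('a) < p"
    and Y: "(\<integral>\<^sup>+z. ennreal (norm (grad \<phi> z) powr p) \<partial>lborel) \<le> ennreal yv" and yv: "yv \<ge> 0" and \<mu>: "\<mu> > 0"
  shows "\<bar>\<phi> x\<bar> \<le> (2*\<rho>+2) / (1 - real DIM('a) / p) *
          (\<mu> powr (1-p) * yv / measure lborel (ball ((\<rho>+1) *\<^sub>R (SOME b::'a. b \<in> Basis)) (1::real)) + \<mu>)"
proof -
  define N where "N = real DIM('a)"
  define e :: 'a where "e = (SOME b. b \<in> Basis)"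
  define A where "A = ball ((\<rho>+1) *\<^sub>R e) (1::real)"
  define mA where "mA = measure lborel A"
  define D where "D = 2*\<rho>+2"
  define cp where "cp = 1 / (1 - N/p)"
  have "1 \<le> DIM('a)" using DIM_positive[where 'a='a] by linarith
  then have N1: "N \<ge> 1" unfolding N_def by simp
  have p1: "p > 1" using N1 pN N_def by linarith
  have Np: "N/p < 1" "N/p > 0" using pN N1 p1 N_def by (auto simp: field_simps)
  have cp: "cp > 0" using Np cp_def by simp
  have D: "D > 0" using \<rho> D_def by simp
  have e: "e \<in> Basis" unfolding e_def by (rule SOME_Basis)
  then have ne: "norm e = 1" by simp
  have Aopen: "open A" unfolding A_def by simp
  have mA: "mA > 0" unfolding mA_def A_def by (simp add: content_ball_pos)
  have emA: "emeasure lborel A = ennreal mA"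
    unfolding mA_def A_def using emeasure_lborel_ball_finite
    by (intro emeasure_eq_ennreal_measure) (simp add: less_top)
  have normA: "\<rho> < norm y \<and> norm y < \<rho> + 2" if y: "y \<in> A" for y
  proof -
    have d: "norm ((\<rho>+1) *\<^sub>R e - y) < 1" using y unfolding A_def by (simp add: dist_norm)
    have n: "norm ((\<rho>+1) *\<^sub>R e) = \<rho> + 1" using ne \<rho> by simp
    have "norm ((\<rho>+1) *\<^sub>R e) \<le> norm y + norm ((\<rho>+1) *\<^sub>R e - y)" by (rule norm_triangle_sub)
    moreover have "norm y \<le> norm ((\<rho>+1) *\<^sub>R e) + norm ((\<rho>+1) *\<^sub>R e - y)"
      by (metis add.commute norm_minus_commute norm_triangle_sub)
    ultimately show ?thesis using d n by linarith
  qed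
  have clo: "closure {x. \<phi> x \<noteq> 0} \<subseteq> \<Omega>" using tf unfolding test_fun_def by blast
  have A0: "\<phi> y = 0" if y: "y \<in> A" for y
  proof -
    have "y \<notin> ball 0 \<rho>" using normA[OF y] by simp
    then have "y \<notin> \<Omega>" using \<Omega>b by (rule contra_subsetD[rotated])
    then have "y \<notin> closure {x. \<phi> x \<noteq> 0}" using clo by (rule contra_subsetD[rotated])
    then show ?thesis by (rule tf_zero_outside(1)[OF tf])
  qed
  show ?thesis
  proof (cases "\<phi> x = 0")
    case True
    have h1: "0 \<le> \<mu> powr (1-p) * yv / mA + \<mu>" using yv mA \<mu> by simp
    have h2: "0 \<le> (2*\<rho>+2) / (1 - N / p)" using \<rho> Np by simp
    have "0 \<le> (2*\<rho>+2) / (1 - N / p) * (\<mu> powr (1-p) * yv / mA + \<mu>)" by (rule mult_nonneg_nonneg[OF h2 h1])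
    then show ?thesis using True unfolding N_def mA_def A_def e_def by simp
  next
    case False
    then have "x \<in> {x. \<phi> x \<noteq> 0}" by simp
    then have "x \<in> closure {x. \<phi> x \<noteq> 0}" by (rule subsetD[OF closure_subset])
    then have "x \<in> \<Omega>" using clo by (rule subsetD[rotated])
    then have "x \<in> ball 0 \<rho>" using \<Omega>b by (rule subsetD[rotated])
    then have xr: "norm x < \<rho>" by simp
    have Dy: "norm (y - x) \<le> D" if "y \<in> A" for y
      using normA[OF that] xr norm_triangle_ineq4[of y x] D_def by linarith
    define lam where "lam t = \<mu> * t powr (-N/p)" for t :: real
    define G where "G t y = norm (grad \<phi> (x + t *\<^sub>R (y - x)))" for t :: real and y
    define F1 where "F1 t y = ennreal (D * (lam t powr (1-p) * G t y powr p)) * indicator {0<..1} t" for t y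
    define F2 where "F2 t = ennreal (D * lam t) * indicator {0<..1::real} t" for t
    have gm[measurable]: "grad \<phi> \<in> borel_measurable borel"
      by (rule borel_measurable_continuous_onI[OF grad_cont[OF tf]])
    have F1m[measurable]: "(\<lambda>(t, y). F1 t y) \<in> borel_measurable (lborel \<Otimes>\<^sub>M lborel)"
      unfolding F1_def G_def lam_def by measurable
    have F1m'[measurable]: "(\<lambda>(y, t). F1 t y) \<in> borel_measurable (lborel \<Otimes>\<^sub>M lborel)"
      unfolding F1_def G_def lam_def by measurable
    have F2m[measurable]: "F2 \<in> borel_measurable lborel"
      unfolding F2_def lam_def by measurable
    have step1: "ennreal \<bar>\<phi> x\<bar> \<le> (\<integral>\<^sup>+t. F1 t y \<partial>lborel) + (\<integral>\<^sup>+t. F2 t \<partial>lborel)" if y: "y \<in> A" for y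
    proof -
      have "ennreal \<bar>\<phi> x\<bar> = ennreal \<bar>\<phi> y - \<phi> x\<bar>" using A0[OF y] by simp
      also have "\<dots> \<le> (\<integral>\<^sup>+t. ennreal (G t y * norm (y - x)) * indicator {0<..1} t \<partial>lborel)"
        unfolding G_def by (rule ftc_segment[OF tf])
      also have "\<dots> \<le> (\<integral>\<^sup>+t. F1 t y + F2 t \<partial>lborel)"
      proof (rule nn_integral_mono)
        fix t :: real
        show "ennreal (G t y * norm (y - x)) * indicator {0<..1} t \<le> F1 t y + F2 t"
        proof (cases "t \<in> {0<..1}")
          case True
          then have lp: "lam t > 0" unfolding lam_def using \<mu> by simp
          have G0: "G t y \<ge> 0" unfolding G_def by simp
          have "G t y * norm (y - x) \<le> D * G t y"
            using mult_right_mono[OF Dy[OF y] G0] by (simp add: mult.commute)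
          also have "\<dots> \<le> D * (lam t powr (1 - p) * G t y powr p + lam t)"
            using young_lin[OF G0 lp p1] D by simp
          finally have le: "G t y * norm (y - x) \<le> D * (lam t powr (1 - p) * G t y powr p) + D * lam t"
            by (simp add: algebra_simps)
          have "ennreal (G t y * norm (y - x)) \<le> ennreal (D * (lam t powr (1 - p) * G t y powr p) + D * lam t)"
            using le by (rule ennreal_leI)
          also have "\<dots> = ennreal (D * (lam t powr (1 - p) * G t y powr p)) + ennreal (D * lam t)"
            using D lp by (intro ennreal_plus) auto
          finally show ?thesis using True unfolding F1_def F2_def by simp
        qed (simp add: F1_def F2_def)
      qed
      also have "\<dots> = (\<integral>\<^sup>+t. F1 t y \<partial>lborel) + (\<integral>\<^sup>+t. F2 t \<partial>lborel)"
        by (rule nn_integral_add) measurable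
      finally show ?thesis .
    qed
    have I2: "(\<integral>\<^sup>+t. F2 t \<partial>lborel) = ennreal (D * \<mu> * cp)"
    proof -
      have "(\<integral>\<^sup>+t. F2 t \<partial>lborel) = (\<integral>\<^sup>+t. ennreal (D * \<mu>) * (ennreal (t powr (- (N/p))) * indicator {0<..1} t) \<partial>lborel)"
        unfolding F2_def lam_def using D \<mu>
        by (intro nn_integral_cong) (simp add: ennreal_mult mult.assoc)
      also have "\<dots> = ennreal (D * \<mu>) * ennreal cp"
        using powr_int_01[of "N/p"] Np unfolding cp_def by (simp add: nn_integral_cmult)
      finally show ?thesis using D \<mu> cp by (simp add: ennreal_mult)
    qed
    have I1: "(\<integral>\<^sup>+t. (\<integral>\<^sup>+y. F1 t y \<partial>lborel) \<partial>lborel) \<le> ennreal (D * \<mu> powr (1-p) * yv * cp)"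
    proof -
      have "(\<integral>\<^sup>+t. (\<integral>\<^sup>+y. F1 t y \<partial>lborel) \<partial>lborel)
          \<le> (\<integral>\<^sup>+t. ennreal (D * \<mu> powr (1-p) * yv) * (ennreal (t powr (- (N/p))) * indicator {0<..1} t) \<partial>lborel)"
      proof (rule nn_integral_mono)
        fix t :: real
        show "(\<integral>\<^sup>+y. F1 t y \<partial>lborel) \<le> ennreal (D * \<mu> powr (1-p) * yv) * (ennreal (t powr (- (N/p))) * indicator {0<..1} t)"
        proof (cases "t \<in> {0<..1}")
          case True
          then have t0: "t > 0" by simp
          have F1e: "F1 t y = ennreal (D * lam t powr (1-p)) * ennreal (norm (grad \<phi> (x + t *\<^sub>R (y - x))) powr p)" for y
            unfolding F1_def G_def using True D by (simp add: ennreal_mult mult.assoc)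
          have "(\<integral>\<^sup>+y. F1 t y \<partial>lborel) = ennreal (D * lam t powr (1-p)) * (\<integral>\<^sup>+y. ennreal (norm (grad \<phi> (x + t *\<^sub>R (y - x))) powr p) \<partial>lborel)"
            unfolding F1e by (rule nn_integral_cmult) measurable
          also have "(\<integral>\<^sup>+y. ennreal (norm (grad \<phi> (x + t *\<^sub>R (y - x))) powr p) \<partial>lborel)
               = ennreal (t powr - N) * (\<integral>\<^sup>+z. ennreal (norm (grad \<phi> z) powr p) \<partial>lborel)"
            unfolding N_def by (rule nn_integral_scale[OF _ t0, where f="\<lambda>z. ennreal (norm (grad \<phi> z) powr p)"]) measurable
          also have "ennreal (D * lam t powr (1-p)) * (ennreal (t powr - N) * (\<integral>\<^sup>+z. ennreal (norm (grad \<phi> z) powr p) \<partial>lborel))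
              \<le> ennreal (D * lam t powr (1-p)) * (ennreal (t powr - N) * ennreal yv)"
            by (intro mult_left_mono Y) auto
          also have "\<dots> = ennreal (D * \<mu> powr (1-p) * yv) * ennreal (t powr (- (N/p)))"
          proof -
            have "lam t powr (1-p) * t powr - N = \<mu> powr (1-p) * t powr (- (N/p))"
              unfolding lam_def using t0 \<mu> p1
              apply (simp add: powr_mult powr_powr powr_add[symmetric] algebra_simps)
              apply (rule arg_cong[where f="\<lambda>e. t powr e"])
              by (simp add: field_simps)
            then have "D * lam t powr (1-p) * (t powr - N * yv) = D * \<mu> powr (1-p) * yv * t powr (- (N/p))"
              by (simp add: algebra_simps)
            then show ?thesis using D yv
              by (simp add: ennreal_mult[symmetric] mult.assoc del: ennreal_mult)
          qed
          finally show ?thesis using True by simp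
        qed (simp add: F1_def)
      qed
      also have "\<dots> = ennreal (D * \<mu> powr (1-p) * yv) * ennreal cp"
        using powr_int_01[of "N/p"] Np unfolding cp_def by (simp add: nn_integral_cmult)
      finally show ?thesis using D yv cp by (simp add: ennreal_mult)
    qed
    have "ennreal \<bar>\<phi> x\<bar> * ennreal mA = (\<integral>\<^sup>+y. ennreal \<bar>\<phi> x\<bar> * indicator A y \<partial>lborel)"
      using Aopen by (simp add: nn_integral_cmult_indicator emA)
    also have "\<dots> \<le> (\<integral>\<^sup>+y. ((\<integral>\<^sup>+t. F1 t y \<partial>lborel) + (\<integral>\<^sup>+t. F2 t \<partial>lborel)) * indicator A y \<partial>lborel)"
      by (intro nn_integral_mono) (auto simp: indicator_def step1)
    also have "\<dots> = (\<integral>\<^sup>+y. (\<integral>\<^sup>+t. F1 t y \<partial>lborel) * indicator A y \<partial>lborel) + (\<integral>\<^sup>+y. (\<integral>\<^sup>+t. F2 t \<partial>lborel) * indicator A y \<partial>lborel)"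
      unfolding distrib_right using Aopen by (intro nn_integral_add) measurable
    also have "(\<integral>\<^sup>+y. (\<integral>\<^sup>+t. F2 t \<partial>lborel) * indicator A y \<partial>lborel) = ennreal (D * \<mu> * cp) * ennreal mA"
      using Aopen by (simp add: nn_integral_cmult_indicator emA I2)
    also have "(\<integral>\<^sup>+y. (\<integral>\<^sup>+t. F1 t y \<partial>lborel) * indicator A y \<partial>lborel) \<le> (\<integral>\<^sup>+y. (\<integral>\<^sup>+t. F1 t y \<partial>lborel) \<partial>lborel)"
      by (intro nn_integral_mono) (auto simp: indicator_def)
    also have "(\<integral>\<^sup>+y. (\<integral>\<^sup>+t. F1 t y \<partial>lborel) \<partial>lborel) = (\<integral>\<^sup>+t. (\<integral>\<^sup>+y. F1 t y \<partial>lborel) \<partial>lborel)"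
      by (rule lborel_pair.Fubini') measurable
    also note I1
    finally have fin: "ennreal \<bar>\<phi> x\<bar> * ennreal mA \<le> ennreal (D * \<mu> powr (1-p) * yv * cp) + ennreal (D * \<mu> * cp) * ennreal mA"
      by (auto intro: add_right_mono)
    have e1: "ennreal (\<bar>\<phi> x\<bar> * mA) = ennreal \<bar>\<phi> x\<bar> * ennreal mA"
      using mA by (intro ennreal_mult) auto
    have e3: "ennreal (D * \<mu> * cp * mA) = ennreal (D * \<mu> * cp) * ennreal mA"
      using mA D \<mu> cp by (intro ennreal_mult) auto
    have e2: "ennreal (D * \<mu> powr (1-p) * yv * cp + D * \<mu> * cp * mA) = ennreal (D * \<mu> powr (1-p) * yv * cp) + ennreal (D * \<mu> * cp * mA)"
      using mA D \<mu> cp yv by (intro ennreal_plus) auto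
    have "ennreal (\<bar>\<phi> x\<bar> * mA) \<le> ennreal (D * \<mu> powr (1-p) * yv * cp + D * \<mu> * cp * mA)"
      unfolding e1 e2 e3 by (rule fin)
    then have "\<bar>\<phi> x\<bar> * mA \<le> D * \<mu> powr (1-p) * yv * cp + D * \<mu> * cp * mA"
      using D \<mu> cp mA yv by (subst (asm) ennreal_le_iff) auto
    then have "\<bar>\<phi> x\<bar> \<le> (D * \<mu> powr (1-p) * yv * cp + D * \<mu> * cp * mA) / mA"
      using mA by (simp add: field_simps)
    also have "\<dots> = D * cp * (\<mu> powr (1-p) * yv / mA + \<mu>)"
      using mA by (simp add: field_simps)
    finally show ?thesis unfolding D_def cp_def N_def mA_def A_def e_def by (simp add: field_simps)
  qed
qed



lemma powr_sum_le:
  fixes a b p :: real assumes a: "a \<ge> 0" and b: "b \<ge> 0" and p: "p > 0"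
  shows "(a + b) powr p \<le> 2 powr p * (a powr p + b powr p)"
proof -
  have "(a + b) powr p \<le> (2 * max a b) powr p"
    using a b p by (intro powr_mono2) auto
  also have "\<dots> = 2 powr p * max a b powr p" using a b by (simp add: powr_mult)
  also have "max a b powr p \<le> a powr p + b powr p"
    by (cases "a \<le> b") (auto simp: max_def)
  finally show ?thesis by simp
qed

lemma cont_meas_leb: "continuous_on UNIV f \<Longrightarrow> f \<in> borel_measurable lebesgue"
  by (simp add: measurable_completion borel_measurable_continuous_onI)

lemma lebesgue_finite_bounded:
  fixes \<Omega> :: "'a::euclidean_space set"
  assumes "open \<Omega>" "bounded \<Omega>"
  shows "\<Omega> \<in> sets lebesgue" "emeasure lebesgue \<Omega> < \<infinity>"
proof -
  have b: "\<Omega> \<in> sets lborel" using assms(1) by simp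
  then show "\<Omega> \<in> sets lebesgue" by (rule sets_completionI_sets)
  have "emeasure lebesgue \<Omega> = emeasure lborel \<Omega>"
    using b by (simp add: emeasure_completion main_part_sets)
  then show "emeasure lebesgue \<Omega> < \<infinity>" using emeasure_bounded_finite[OF assms(2)] by simp
qed

lemma set_integrable_bdd_const:
  fixes \<Omega> :: "'a::euclidean_space set"
  assumes "open \<Omega>" "bounded \<Omega>"
  shows "set_integrable lebesgue \<Omega> (\<lambda>x. c::real)"
  unfolding set_integrable_def
  by (rule integrable_scaleR_left[OF integrable_real_indicator[OF lebesgue_finite_bounded[OF assms]]])



lemma morrey_W:
  fixes \<Omega> :: "'a::euclidean_space set"
  assumes W: "W01p \<Omega> p u Du" and \<Omega>b: "\<Omega> \<subseteq> ball 0 \<rho>" and \<rho>: "\<rho> > 0" and pN: "real DIM('a) < p"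
    and \<Omega>o: "open \<Omega>"
  shows "AE x in lebesgue. x \<in> \<Omega> \<longrightarrow> \<bar>u x\<bar> \<le> (2*\<rho>+2) / (1 - real DIM('a)/p) *
     (2 powr p / measure lborel (ball ((\<rho>+1) *\<^sub>R (SOME b::'a. b \<in> Basis)) (1::real)) + 1) *
     ((LINT x:\<Omega>|lebesgue. norm (Du x) powr p) + 1) powr (1/p)"
proof -
  define X where "X = (LINT x:\<Omega>|lebesgue. norm (Du x) powr p)"
  define mA where "mA = measure lborel (ball ((\<rho>+1) *\<^sub>R (SOME b::'a. b \<in> Basis)) (1::real))"
  define Kd where "Kd = (2*\<rho>+2) / (1 - real DIM('a)/p)"
  have "1 \<le> DIM('a)" using DIM_positive[where 'a='a] by linarith
  then have N1: "real DIM('a) \<ge> 1" by simp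
  have p1: "p > 1" using N1 pN by linarith
  have Np: "real DIM('a)/p < 1" using pN p1 by (auto simp: field_simps)
  have Kd: "Kd > 0" unfolding Kd_def using \<rho> Np by simp
  have mA: "mA > 0" unfolding mA_def by (simp add: content_ball_pos)
  have bdd: "bounded \<Omega>" using \<Omega>b bounded_ball bounded_subset by blast
  have \<Omega>m[measurable]: "\<Omega> \<in> sets lebesgue" using lebesgue_finite_bounded[OF \<Omega>o bdd] by simp
  from W obtain \<phi> where tf: "\<And>k. test_fun \<Omega> (\<phi> k)"
    and c1: "(\<lambda>k. LINT x:\<Omega>|lebesgue. \<bar>\<phi> k x - u x\<bar> powr p) \<longlonglongrightarrow> 0"
    and c2: "(\<lambda>k. LINT x:\<Omega>|lebesgue. norm (grad (\<phi> k) x - Du x) powr p) \<longlonglongrightarrow> 0"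
    and um[measurable]: "u \<in> borel_measurable lebesgue" and Dum[measurable]: "Du \<in> borel_measurable lebesgue"
    and ui: "set_integrable lebesgue \<Omega> (\<lambda>x. \<bar>u x\<bar> powr p)"
    and Dui: "set_integrable lebesgue \<Omega> (\<lambda>x. norm (Du x) powr p)"
    unfolding W01p_def by blast
  define L2 where "L2 k = (LINT x:\<Omega>|lebesgue. norm (grad (\<phi> k) x - Du x) powr p)" for k
  have gm[measurable]: "grad (\<phi> k) \<in> borel_measurable lebesgue" for k
    by (rule cont_meas_leb[OF grad_cont[OF tf]])
  have \<phi>m[measurable]: "\<phi> k \<in> borel_measurable lebesgue" for k
    by (rule cont_meas_leb[OF tf_cont[OF tf]])
  have int1: "set_integrable lebesgue \<Omega> (\<lambda>x. \<bar>\<phi> k x - u x\<bar> powr p)" for k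
  proof -
    obtain B where B: "\<And>x. \<bar>\<phi> k x\<bar> \<le> B" using tf_bounds(1)[OF tf] by blast
    have B0: "B \<ge> 0" using B[of 0] by simp
    show ?thesis
    proof (rule set_integrable_bound[where f="\<lambda>x. 2 powr p * (B powr p + \<bar>u x\<bar> powr p)"])
      show "set_integrable lebesgue \<Omega> (\<lambda>x. 2 powr p * (B powr p + \<bar>u x\<bar> powr p))"
        using set_integrable_bdd_const[OF \<Omega>o bdd] ui by (intro set_integrable_mult_right set_integral_add(1)) auto
      show "set_borel_measurable lebesgue \<Omega> (\<lambda>x. \<bar>\<phi> k x - u x\<bar> powr p)"
        unfolding set_borel_measurable_def by measurable
      show "AE x in lebesgue. x \<in> \<Omega> \<longrightarrow> norm (\<bar>\<phi> k x - u x\<bar> powr p) \<le> norm (2 powr p * (B powr p + \<bar>u x\<bar> powr p))"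
      proof (intro AE_I2 impI)
        fix x
        have "\<bar>\<phi> k x - u x\<bar> \<le> B + \<bar>u x\<bar>" using B[of x] by linarith
        then have "\<bar>\<phi> k x - u x\<bar> powr p \<le> (B + \<bar>u x\<bar>) powr p" using p1 by (intro powr_mono2) auto
        also have "\<dots> \<le> 2 powr p * (B powr p + \<bar>u x\<bar> powr p)" using B0 p1 by (intro powr_sum_le) auto
        finally show "norm (\<bar>\<phi> k x - u x\<bar> powr p) \<le> norm (2 powr p * (B powr p + \<bar>u x\<bar> powr p))" by simp
      qed
    qed
  qed
  have int2: "set_integrable lebesgue \<Omega> (\<lambda>x. norm (grad (\<phi> k) x - Du x) powr p)" for k
  proof -
    obtain B where B: "\<And>x. norm (grad (\<phi> k) x) \<le> B" using tf_bounds(2)[OF tf] by blast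
    have B0: "B \<ge> 0" using B[of 0] norm_ge_zero order_trans by blast
    show ?thesis
    proof (rule set_integrable_bound[where f="\<lambda>x. 2 powr p * (B powr p + norm (Du x) powr p)"])
      show "set_integrable lebesgue \<Omega> (\<lambda>x. 2 powr p * (B powr p + norm (Du x) powr p))"
        using set_integrable_bdd_const[OF \<Omega>o bdd] Dui by (intro set_integrable_mult_right set_integral_add(1)) auto
      show "set_borel_measurable lebesgue \<Omega> (\<lambda>x. norm (grad (\<phi> k) x - Du x) powr p)"
        unfolding set_borel_measurable_def by measurable
      show "AE x in lebesgue. x \<in> \<Omega> \<longrightarrow> norm (norm (grad (\<phi> k) x - Du x) powr p) \<le> norm (2 powr p * (B powr p + norm (Du x) powr p))"
      proof (intro AE_I2 impI)
        fix x
        have "norm (grad (\<phi> k) x - Du x) \<le> B + norm (Du x)" using B[of x] norm_triangle_ineq4[of "grad (\<phi> k) x" "Du x"] by linarith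
        then have "norm (grad (\<phi> k) x - Du x) powr p \<le> (B + norm (Du x)) powr p" using p1 by (intro powr_mono2) auto
        also have "\<dots> \<le> 2 powr p * (B powr p + norm (Du x) powr p)" using B0 p1 by (intro powr_sum_le) auto
        finally show "norm (norm (grad (\<phi> k) x - Du x) powr p) \<le> norm (2 powr p * (B powr p + norm (Du x) powr p))" by simp
      qed
    qed
  qed
  have X0: "X \<ge> 0" unfolding X_def set_lebesgue_integral_def by (rule integral_nonneg_AE, rule AE_I2) (simp add: indicator_def)
  have L20: "L2 k \<ge> 0" for k unfolding L2_def set_lebesgue_integral_def by (rule integral_nonneg_AE, rule AE_I2) (simp add: indicator_def)
  have Ybound: "(\<integral>\<^sup>+z. ennreal (norm (grad (\<phi> k) z) powr p) \<partial>lborel) \<le> ennreal (2 powr p * (X + L2 k))" for k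
  proof -
    let ?h = "\<lambda>z. 2 powr p * (norm (Du z) powr p + norm (grad (\<phi> k) z - Du z) powr p)"
    have hi: "set_integrable lebesgue \<Omega> ?h"
      using Dui int2 by (intro set_integrable_mult_right set_integral_add(1)) auto
    have "(\<integral>\<^sup>+z. ennreal (norm (grad (\<phi> k) z) powr p) \<partial>lborel) = (\<integral>\<^sup>+z. ennreal (norm (grad (\<phi> k) z) powr p) \<partial>lebesgue)"
      by (rule nn_integral_completion[symmetric])
    also have "\<dots> \<le> (\<integral>\<^sup>+z. ennreal (indicator \<Omega> z *\<^sub>R ?h z) \<partial>lebesgue)"
    proof (rule nn_integral_mono)
      fix z
      show "ennreal (norm (grad (\<phi> k) z) powr p) \<le> ennreal (indicator \<Omega> z *\<^sub>R ?h z)"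
      proof (cases "z \<in> \<Omega>")
        case True
        have "norm (grad (\<phi> k) z) \<le> norm (Du z) + norm (grad (\<phi> k) z - Du z)"
          using norm_triangle_ineq[of "Du z" "grad (\<phi> k) z - Du z"] by simp
        then have "norm (grad (\<phi> k) z) powr p \<le> (norm (Du z) + norm (grad (\<phi> k) z - Du z)) powr p"
          using p1 by (intro powr_mono2) auto
        also have "\<dots> \<le> ?h z" using p1 by (intro powr_sum_le) auto
        finally show ?thesis using True by (intro ennreal_leI) simp
      next
        case False
        have clo: "closure {x. \<phi> k x \<noteq> 0} \<subseteq> \<Omega>" using tf[of k] unfolding test_fun_def by blast
        have "z \<notin> closure {x. \<phi> k x \<noteq> 0}" using False clo by (rule contra_subsetD[rotated])
        then have "grad (\<phi> k) z = 0" by (rule tf_zero_outside(2)[OF tf])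
        then show ?thesis using False p1 by simp
      qed
    qed
    also have "\<dots> = ennreal (LINT z:\<Omega>|lebesgue. ?h z)"
      unfolding set_lebesgue_integral_def
      using hi unfolding set_integrable_def
      by (intro nn_integral_eq_integral) (auto simp: indicator_def)
    also have "(LINT z:\<Omega>|lebesgue. ?h z) = 2 powr p * (X + L2 k)"
      unfolding X_def L2_def using Dui int2 by simp
    finally show ?thesis .
  qed
  define \<mu> where "\<mu> = (X + 1) powr (1/p)"
  have \<mu>: "\<mu> > 0" unfolding \<mu>_def using X0 by simp
  have \<mu>p: "\<mu> powr p = X + 1" unfolding \<mu>_def using X0 p1 by (simp add: powr_powr)
  have pw: "\<bar>\<phi> k x\<bar> \<le> Kd * (\<mu> powr (1-p) * (2 powr p * (X + L2 k)) / mA + \<mu>)" for k x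
    unfolding Kd_def mA_def
    by (rule morrey_test[OF tf \<Omega>b \<rho> pN Ybound _ \<mu>]) (use X0 L20 in simp)
  define w where "w n x = indicator \<Omega> x *\<^sub>R (\<bar>\<phi> n x - u x\<bar> powr p)" for n x
  have wi: "integrable lebesgue (w n)" for n using int1[of n] unfolding set_integrable_def w_def .
  have wl: "(\<lambda>n. \<integral>x. norm (w n x) \<partial>lebesgue) \<longlonglongrightarrow> 0"
  proof -
    have "(\<integral>x. norm (w n x) \<partial>lebesgue) = (LINT x:\<Omega>|lebesgue. \<bar>\<phi> n x - u x\<bar> powr p)" for n
      unfolding set_lebesgue_integral_def w_def by (rule Bochner_Integration.integral_cong) (auto simp: indicator_def)
    then show ?thesis using c1 by simp
  qed
  obtain r where r: "strict_mono r" "AE x in lebesgue. (\<lambda>n. w (r n) x) \<longlonglongrightarrow> 0"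
    using tendsto_L1_AE_subseq[OF wi wl] by blast
  have L2r: "(\<lambda>n. L2 (r n)) \<longlonglongrightarrow> 0"
    using LIMSEQ_subseq_LIMSEQ[OF c2 r(1)] unfolding L2_def o_def .
  show ?thesis
    using r(2)
  proof eventually_elim
    case (elim x)
    show ?case
    proof
      assume x: "x \<in> \<Omega>"
      have a: "(\<lambda>n. \<bar>\<phi> (r n) x - u x\<bar> powr p) \<longlonglongrightarrow> 0" using elim x unfolding w_def by simp
      have "(\<lambda>n. (\<bar>\<phi> (r n) x - u x\<bar> powr p) powr (1/p)) \<longlonglongrightarrow> 0"
        by (rule tendsto_zero_powrI[OF a tendsto_const]) (use p1 in auto)
      then have "(\<lambda>n. \<bar>\<phi> (r n) x - u x\<bar>) \<longlonglongrightarrow> 0"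
        using p1 by (simp add: powr_powr)
      then have "(\<lambda>n. \<phi> (r n) x) \<longlonglongrightarrow> u x"
        by (simp add: LIM_zero_iff tendsto_rabs_zero_iff)
      then have lim1: "(\<lambda>n. \<bar>\<phi> (r n) x\<bar>) \<longlonglongrightarrow> \<bar>u x\<bar>" by (rule tendsto_rabs)
      have lim2: "(\<lambda>n. Kd * (\<mu> powr (1-p) * (2 powr p * (X + L2 (r n))) / mA + \<mu>))
          \<longlonglongrightarrow> Kd * (\<mu> powr (1-p) * (2 powr p * (X + 0)) / mA + \<mu>)"
        by (intro tendsto_intros L2r) (use mA in auto)
      have ux: "\<bar>u x\<bar> \<le> Kd * (\<mu> powr (1-p) * (2 powr p * (X + 0)) / mA + \<mu>)"
        by (rule LIMSEQ_le[OF lim1 lim2]) (use pw in auto)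
      have "\<mu> powr (1-p) * X \<le> \<mu> powr (1-p) * \<mu> powr p"
        using \<mu>p by (intro mult_left_mono) auto
      also have "\<dots> = \<mu>" using \<mu> by (simp add: powr_add[symmetric])
      finally have m: "\<mu> powr (1-p) * X \<le> \<mu>" .
      have "\<mu> powr (1-p) * (2 powr p * (X + 0)) / mA = (2 powr p / mA) * (\<mu> powr (1-p) * X)"
        by (simp add: field_simps)
      also have "\<dots> \<le> (2 powr p / mA) * \<mu>" using m mA by (intro mult_left_mono) auto
      finally have "Kd * (\<mu> powr (1-p) * (2 powr p * (X + 0)) / mA + \<mu>) \<le> Kd * ((2 powr p / mA) * \<mu> + \<mu>)"
        using Kd by (intro mult_left_mono) auto
      also have "\<dots> = Kd * (2 powr p / mA + 1) * \<mu>" by (simp add: algebra_simps)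
      finally show "\<bar>u x\<bar> \<le> (2*\<rho>+2) / (1 - real DIM('a)/p) *
         (2 powr p / measure lborel (ball ((\<rho>+1) *\<^sub>R (SOME b::'a. b \<in> Basis)) (1::real)) + 1) *
         ((LINT x:\<Omega>|lebesgue. norm (Du x) powr p) + 1) powr (1/p)"
        using ux unfolding Kd_def mA_def \<mu>_def X_def by linarith
    qed
  qed
qed



lemma npow: "norm (v::'a::real_inner) powr (s - 2) * (v \<bullet> v) = norm v powr s"
proof (cases "v = 0")
  case True then show ?thesis by simp
next
  case False
  then have n: "norm v > 0" by simp
  have a: "v \<bullet> v = norm v powr 2" using n by (simp add: power2_norm_eq_inner[symmetric] powr_realpow)
  have b: "norm v powr (s - 2) * norm v powr 2 = norm v powr s"
    by (simp only: powr_add[symmetric] diff_add_cancel)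
  show ?thesis by (subst a) (rule b)
qed

lemma energy:
  fixes \<Omega> :: "'a::euclidean_space set"
  assumes ws: "weak_solution \<Omega> p q g f u Du"
    and \<Omega>o: "open \<Omega>" and bdd: "bounded \<Omega>"
    and pq: "1 < q" "q < p"
    and gc: "continuous_on UNIV g" and ga: "\<And>s. g s \<ge> a0"
    and c0': "c0' \<ge> 0" "c0' < a0" "c0 \<le> c0'" and c1: "c1 > 0" and \<alpha>: "1 \<le> \<alpha>"
    and H3: "AE x in lebesgue. x \<in> \<Omega> \<longrightarrow>
        (\<forall>s \<xi>. f x s \<xi> * s \<le> c0 * norm \<xi> powr p + c1 * (\<bar>s\<bar> powr \<alpha> + 1))"
    and M: "M \<ge> 0" and uM: "AE x in lebesgue. x \<in> \<Omega> \<longrightarrow> \<bar>u x\<bar> \<le> M"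
  shows "a0 * (LINT x:\<Omega>|lebesgue. norm (Du x) powr p)
          - ((a0 - c0')/2 * (LINT x:\<Omega>|lebesgue. norm (Du x) powr p) + ((a0-c0')/2) powr (-q/(p-q)) * measure lebesgue \<Omega>)
         \<le> c0' * (LINT x:\<Omega>|lebesgue. norm (Du x) powr p) + c1 * (M powr \<alpha> + 1) * measure lebesgue \<Omega>"
proof -
  define X where "X = (LINT x:\<Omega>|lebesgue. norm (Du x) powr p)"
  define m where "m = measure lebesgue \<Omega>"
  define \<delta> where "\<delta> = (a0 - c0')/2"
  define C\<epsilon> where "C\<epsilon> = \<delta> powr (-q/(p-q))"
  have \<delta>: "\<delta> > 0" unfolding \<delta>_def using c0' by simp
  have W: "W01p \<Omega> p u Du" using ws unfolding weak_solution_def by blast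
  have eq: "(LINT x:\<Omega>|lebesgue. g (u x) * norm (Du x) powr (p - 2) * (Du x \<bullet> Du x))
        - (LINT x:\<Omega>|lebesgue. norm (Du x) powr (q - 2) * (Du x \<bullet> Du x))
        = (LINT x:\<Omega>|lebesgue. f x (u x) (Du x) * u x)"
    using ws W unfolding weak_solution_def by blast
  have \<Omega>m[measurable]: "\<Omega> \<in> sets lebesgue" and fin: "emeasure lebesgue \<Omega> < \<infinity>"
    using lebesgue_finite_bounded[OF \<Omega>o bdd] by auto
  have um[measurable]: "u \<in> borel_measurable lebesgue" and Dum[measurable]: "Du \<in> borel_measurable lebesgue"
    and Dui: "set_integrable lebesgue \<Omega> (\<lambda>x. norm (Du x) powr p)"
    using W unfolding W01p_def by auto
  have gm[measurable]: "g \<in> borel_measurable borel" by (rule borel_measurable_continuous_onI[OF gc])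
  have consti: "set_integrable lebesgue \<Omega> (\<lambda>x. c::real)" for c by (rule set_integrable_bdd_const[OF \<Omega>o bdd])
  have constI: "(LINT x:\<Omega>|lebesgue. c) = c * m" for c
    unfolding m_def using fin by (subst set_integral_const) auto
  have m0: "m \<ge> 0" unfolding m_def by simp
  have X0: "X \<ge> 0" unfolding X_def set_lebesgue_integral_def by (rule integral_nonneg_AE, rule AE_I2) (simp add: indicator_def)
  have e1: "(\<lambda>x. g (u x) * norm (Du x) powr (p - 2) * (Du x \<bullet> Du x)) = (\<lambda>x. g (u x) * norm (Du x) powr p)"
    by (rule ext) (simp add: npow mult.assoc)
  obtain Gm where Gm: "\<And>s. s \<in> {-M..M} \<Longrightarrow> \<bar>g s\<bar> \<le> Gm"
  proof -
    have "compact (g ` {-M..M})"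
      by (rule compact_continuous_image[OF continuous_on_subset[OF gc]]) auto
    then obtain B where "\<forall>y\<in>g ` {-M..M}. norm y \<le> B" using compact_imp_bounded bounded_iff by metis
    then show ?thesis by (intro that[of B]) auto
  qed
  have Gm0: "Gm \<ge> 0" using Gm[of 0] M by auto
  have gi: "set_integrable lebesgue \<Omega> (\<lambda>x. g (u x) * norm (Du x) powr p)"
  proof (rule set_integrable_bound[where f="\<lambda>x. Gm * norm (Du x) powr p"])
    show "set_integrable lebesgue \<Omega> (\<lambda>x. Gm * norm (Du x) powr p)" using Dui by auto
    show "set_borel_measurable lebesgue \<Omega> (\<lambda>x. g (u x) * norm (Du x) powr p)"
      unfolding set_borel_measurable_def by measurable
    show "AE x in lebesgue. x \<in> \<Omega> \<longrightarrow> norm (g (u x) * norm (Du x) powr p) \<le> norm (Gm * norm (Du x) powr p)"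
      using uM
    proof eventually_elim
      case (elim x)
      show ?case
      proof
        assume "x \<in> \<Omega>"
        then have "\<bar>u x\<bar> \<le> M" using elim by blast
        then have "u x \<in> {-M..M}" by (simp add: abs_le_iff)
        then have "\<bar>g (u x)\<bar> \<le> Gm" by (rule Gm)
        then show "norm (g (u x) * norm (Du x) powr p) \<le> norm (Gm * norm (Du x) powr p)"
          using Gm0 by (simp add: abs_mult mult_right_mono)
      qed
    qed
  qed
  have T1: "a0 * X \<le> (LINT x:\<Omega>|lebesgue. g (u x) * norm (Du x) powr (p - 2) * (Du x \<bullet> Du x))"
  proof -
    have "a0 * X = (LINT x:\<Omega>|lebesgue. a0 * norm (Du x) powr p)" unfolding X_def by simp
    also have "\<dots> \<le> (LINT x:\<Omega>|lebesgue. g (u x) * norm (Du x) powr p)"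
      by (rule set_integral_mono) (use Dui gi ga in \<open>auto intro: mult_right_mono\<close>)
    finally show ?thesis unfolding e1 .
  qed
  have e2: "(\<lambda>x. norm (Du x) powr (q - 2) * (Du x \<bullet> Du x)) = (\<lambda>x. norm (Du x) powr q)"
    by (rule ext) (simp add: npow)
  have T2: "(LINT x:\<Omega>|lebesgue. norm (Du x) powr (q - 2) * (Du x \<bullet> Du x)) \<le> \<delta> * X + C\<epsilon> * m"
  proof -
    have hi: "set_integrable lebesgue \<Omega> (\<lambda>x. \<delta> * norm (Du x) powr p + C\<epsilon>)"
      using Dui consti by (intro set_integral_add(1)) auto
    have "(LINT x:\<Omega>|lebesgue. norm (Du x) powr q) \<le> (LINT x:\<Omega>|lebesgue. \<delta> * norm (Du x) powr p + C\<epsilon>)"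
      unfolding set_lebesgue_integral_def
    proof (rule integral_mono_AE')
      show "integrable lebesgue (\<lambda>x. indicator \<Omega> x *\<^sub>R (\<delta> * norm (Du x) powr p + C\<epsilon>))"
        using hi unfolding set_integrable_def .
      have y: "norm (Du x) powr q \<le> \<delta> * norm (Du x) powr p + C\<epsilon>" for x
        unfolding C\<epsilon>_def using young_pow[of q p \<delta> "norm (Du x)"] pq \<delta> by simp
      have nn: "0 \<le> \<delta> * norm (Du x) powr p + C\<epsilon>" for x unfolding C\<epsilon>_def using \<delta> by simp
      show "AE x in lebesgue. indicator \<Omega> x *\<^sub>R norm (Du x) powr q \<le> indicator \<Omega> x *\<^sub>R (\<delta> * norm (Du x) powr p + C\<epsilon>)"
        using y by (intro AE_I2) (simp add: indicator_def)
      show "AE x in lebesgue. 0 \<le> indicator \<Omega> x *\<^sub>R (\<delta> * norm (Du x) powr p + C\<epsilon>)"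
        using nn by (intro AE_I2) (simp add: indicator_def)
    qed
    also have "\<dots> = \<delta> * X + C\<epsilon> * m"
      unfolding X_def using Dui consti by (simp add: constI)
    finally show ?thesis unfolding e2 .
  qed
  have T3: "(LINT x:\<Omega>|lebesgue. f x (u x) (Du x) * u x) \<le> c0' * X + c1 * (M powr \<alpha> + 1) * m"
  proof -
    have hi: "set_integrable lebesgue \<Omega> (\<lambda>x. c0' * norm (Du x) powr p + c1 * (M powr \<alpha> + 1))"
      using Dui consti by (intro set_integral_add(1)) auto
    have "(LINT x:\<Omega>|lebesgue. f x (u x) (Du x) * u x) \<le> (LINT x:\<Omega>|lebesgue. c0' * norm (Du x) powr p + c1 * (M powr \<alpha> + 1))"
      unfolding set_lebesgue_integral_def
    proof (rule integral_mono_AE')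
      show "integrable lebesgue (\<lambda>x. indicator \<Omega> x *\<^sub>R (c0' * norm (Du x) powr p + c1 * (M powr \<alpha> + 1)))"
        using hi unfolding set_integrable_def .
      show "AE x in lebesgue. indicator \<Omega> x *\<^sub>R (f x (u x) (Du x) * u x) \<le> indicator \<Omega> x *\<^sub>R (c0' * norm (Du x) powr p + c1 * (M powr \<alpha> + 1))"
        using H3 uM
      proof eventually_elim
        case (elim x)
        show ?case
        proof (cases "x \<in> \<Omega>")
          case True
          have "f x (u x) (Du x) * u x \<le> c0 * norm (Du x) powr p + c1 * (\<bar>u x\<bar> powr \<alpha> + 1)"
            using elim True by blast
          also have "\<dots> \<le> c0' * norm (Du x) powr p + c1 * (M powr \<alpha> + 1)"
          proof -
            have "c0 * norm (Du x) powr p \<le> c0' * norm (Du x) powr p" using c0' by (intro mult_right_mono) auto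
            moreover have "\<bar>u x\<bar> powr \<alpha> \<le> M powr \<alpha>" using elim True \<alpha> by (intro powr_mono2) auto
            ultimately show ?thesis using c1 by (smt (verit) mult_left_mono)
          qed
          finally show ?thesis using True by simp
        qed simp
      qed
      show "AE x in lebesgue. 0 \<le> indicator \<Omega> x *\<^sub>R (c0' * norm (Du x) powr p + c1 * (M powr \<alpha> + 1))"
        using c0' c1 by (intro AE_I2) (simp add: indicator_def)
    qed
    also have "\<dots> = c0' * X + c1 * (M powr \<alpha> + 1) * m"
      unfolding X_def using Dui consti by (simp add: constI)
    finally show ?thesis .
  qed
  have "a0 * X - (\<delta> * X + C\<epsilon> * m) \<le> c0' * X + c1 * (M powr \<alpha> + 1) * m"
    using T1 T2 T3 eq by linarith
  then show ?thesis unfolding X_def m_def \<delta>_def C\<epsilon>_def .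
qed



lemma final_arith:
  fixes \<delta> B0 B1 a T :: real
  assumes \<delta>: "\<delta> > 0" and B0: "B0 \<ge> 0" and B1: "B1 \<ge> 0" and a: "0 < a" "a < 1" and T: "T \<ge> 1"
    and h: "\<delta> * T \<le> B0 + B1 * T powr a"
  shows "T \<le> 2 * (B0 + B1 * (\<delta> / (2 * (B1 + 1))) powr (- a / (1 - a))) / \<delta>"
proof -
  define \<eta> where "\<eta> = \<delta> / (2 * (B1 + 1))"
  have \<eta>: "\<eta> > 0" unfolding \<eta>_def using \<delta> B1 by simp
  have y: "T powr a \<le> \<eta> * T powr 1 + \<eta> powr (- a / (1 - a))"
    using young_pow[OF a(1) a(2) \<eta>, of T] T by simp
  have T1: "T powr 1 = T" using T by simp
  have "B1 * T powr a \<le> B1 * (\<eta> * T + \<eta> powr (- a / (1 - a)))"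
    using y T1 B1 by (intro mult_left_mono) auto
  also have "\<dots> = (B1 * \<eta>) * T + B1 * \<eta> powr (- a / (1 - a))" by (simp add: algebra_simps)
  also have "(B1 * \<eta>) * T \<le> (\<delta> / 2) * T"
  proof -
    have "B1 * \<eta> = (\<delta> / 2) * (B1 / (B1 + 1))" unfolding \<eta>_def using B1 by (simp add: field_simps)
    also have "\<dots> \<le> (\<delta> / 2) * 1" using B1 \<delta> by (intro mult_left_mono) auto
    finally show ?thesis using T by (intro mult_right_mono) auto
  qed
  finally have "\<delta> * T \<le> B0 + (\<delta> / 2) * T + B1 * \<eta> powr (- a / (1 - a))" using h by linarith
  then have "(\<delta> / 2) * T \<le> B0 + B1 * \<eta> powr (- a / (1 - a))" by linarith
  then have "T \<le> (B0 + B1 * \<eta> powr (- a / (1 - a))) / (\<delta> / 2)"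
    using \<delta> by (simp add: field_simps)
  then show ?thesis unfolding \<eta>_def by (simp add: field_simps)
qed

theorem mainTheorem3:
  fixes \<Omega> :: "'a::euclidean_space set"
    and p q a0 b c r1 r2 c0 c1 \<alpha> :: real
    and g :: "real \<Rightarrow> real"
    and f :: "'a \<Rightarrow> real \<Rightarrow> 'a \<Rightarrow> real"
    and \<sigma> :: "'a \<Rightarrow> real"
  assumes dom: "bounded_lipschitz_domain \<Omega>"
    and pq: "1 < q" "q < p" "real DIM('a) < p"
    and H1: "continuous_on UNIV g" "a0 > 0" "\<And>s. g s \<ge> a0"
    and H2_car: "caratheodory \<Omega> f"
    and H2_sigma: "\<sigma> \<in> borel_measurable lebesgue" "\<And>x. \<sigma> x \<ge> 0"
        "set_integrable lebesgue \<Omega> (\<lambda>x. \<bar>\<sigma> x\<bar> powr r1)"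
    and H2_const: "b \<ge> 0" "c \<ge> 0" "r1 \<ge> 1" "r2 \<ge> 1"
    and H2: "AE x in lebesgue. x \<in> \<Omega> \<longrightarrow>
        (\<forall>s \<xi>. \<bar>f x s \<xi>\<bar> \<le> \<sigma> x + b * \<bar>s\<bar> powr r2 + c * norm \<xi> powr (p - 1))"
    and H3_const: "c0 < a0" "c1 > 0" "1 \<le> \<alpha>" "\<alpha> < p"
    and H3: "AE x in lebesgue. x \<in> \<Omega> \<longrightarrow>
        (\<forall>s \<xi>. f x s \<xi> * s \<le> c0 * norm \<xi> powr p + c1 * (\<bar>s\<bar> powr \<alpha> + 1))"
  shows "\<exists>R>0. \<exists>R1>0. \<forall>u Du. weak_solution \<Omega> p q g f u Du \<longrightarrow>
           W01p_norm \<Omega> p Du \<le> R1 \<and> (AE x in lebesgue. x \<in> \<Omega> \<longrightarrow> \<bar>u x\<bar> \<le> R)"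
proof -
  have \<Omega>o: "open \<Omega>" and bdd: "bounded \<Omega>" using dom unfolding bounded_lipschitz_domain_def by auto
  obtain \<rho> where \<rho>: "\<rho> > 0" "\<Omega> \<subseteq> ball 0 \<rho>" using bounded_subset_ballD[OF bdd, of 0] by blast
  have "1 \<le> DIM('a)" using DIM_positive[where 'a='a] by linarith
  then have N1: "real DIM('a) \<ge> 1" by simp
  have p1: "p > 1" using N1 pq by linarith
  have Np: "real DIM('a)/p < 1" using pq p1 by (auto simp: field_simps)
  define mA where "mA = measure lborel (ball ((\<rho>+1) *\<^sub>R (SOME b::'a. b \<in> Basis)) (1::real))"
  have mA: "mA > 0" unfolding mA_def by (simp add: content_ball_pos)
  define Kc where "Kc = (2*\<rho>+2) / (1 - real DIM('a)/p) * (2 powr p / mA + 1)"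
  have Kc: "Kc > 0" unfolding Kc_def using \<rho> Np mA by (intro mult_pos_pos divide_pos_pos add_nonneg_pos divide_nonneg_pos) auto
  define m where "m = measure lebesgue \<Omega>"
  have m0: "m \<ge> 0" unfolding m_def by simp
  define c0' where "c0' = max c0 0"
  have c0': "c0' \<ge> 0" "c0' < a0" "c0 \<le> c0'" unfolding c0'_def using H3_const H1 by auto
  define \<delta> where "\<delta> = (a0 - c0')/2"
  have \<delta>: "\<delta> > 0" unfolding \<delta>_def using c0' by simp
  define C\<epsilon> where "C\<epsilon> = \<delta> powr (-q/(p-q))"
  have C\<epsilon>: "C\<epsilon> \<ge> 0" unfolding C\<epsilon>_def by simp
  define B0 where "B0 = C\<epsilon> * m + c1 * m + \<delta>"
  have B0: "B0 \<ge> 0" unfolding B0_def using C\<epsilon> m0 H3_const \<delta> by simp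
  define B1 where "B1 = c1 * m * Kc powr \<alpha>"
  have B1: "B1 \<ge> 0" unfolding B1_def using m0 H3_const by simp
  define a where "a = \<alpha> / p"
  have a: "0 < a" "a < 1" unfolding a_def using H3_const p1 by (auto simp: field_simps)
  define Xb where "Xb = 2 * (B0 + B1 * (\<delta> / (2 * (B1 + 1))) powr (- a / (1 - a))) / \<delta>"
  have "C\<epsilon> * m \<ge> 0" "c1 * m \<ge> 0" using C\<epsilon> m0 H3_const by auto
  then have B0p: "B0 > 0" unfolding B0_def using \<delta> by linarith
  have "0 \<le> B1 * (\<delta> / (2 * (B1 + 1))) powr (- a / (1 - a))" using B1 by simp
  then have "0 < B0 + B1 * (\<delta> / (2 * (B1 + 1))) powr (- a / (1 - a))" using B0p by linarith
  then have Xb: "Xb > 0" unfolding Xb_def using \<delta> by simp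
  have pos1: "Kc * Xb powr (1/p) > 0" using Kc Xb by simp
  have pos2: "Xb powr (1/p) > 0" using Xb by simp
  have main: "\<forall>u Du. weak_solution \<Omega> p q g f u Du \<longrightarrow>
           W01p_norm \<Omega> p Du \<le> Xb powr (1/p) \<and> (AE x in lebesgue. x \<in> \<Omega> \<longrightarrow> \<bar>u x\<bar> \<le> Kc * Xb powr (1/p))"
  proof (intro allI impI)
    fix u Du assume ws: "weak_solution \<Omega> p q g f u Du"
    have W: "W01p \<Omega> p u Du" using ws unfolding weak_solution_def by blast
    define X where "X = (LINT x:\<Omega>|lebesgue. norm (Du x) powr p)"
    have X0: "X \<ge> 0" unfolding X_def set_lebesgue_integral_def
      by (rule integral_nonneg_AE, rule AE_I2) (simp add: indicator_def)
    define M where "M = Kc * (X + 1) powr (1/p)"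
    have M0: "M \<ge> 0" unfolding M_def using Kc by simp
    have AEu: "AE x in lebesgue. x \<in> \<Omega> \<longrightarrow> \<bar>u x\<bar> \<le> M"
      using morrey_W[OF W \<rho>(2) \<rho>(1) pq(3) \<Omega>o] unfolding M_def Kc_def mA_def X_def .
    have en: "a0 * X - (\<delta> * X + C\<epsilon> * m) \<le> c0' * X + c1 * (M powr \<alpha> + 1) * m"
      using energy[OF ws \<Omega>o bdd pq(1) pq(2) H1(1) H1(3) c0' H3_const(2) H3_const(3) H3 M0 AEu]
      unfolding \<delta>_def C\<epsilon>_def m_def X_def .
    have Ma: "M powr \<alpha> = Kc powr \<alpha> * (X + 1) powr a"
      unfolding M_def a_def using Kc X0 by (simp add: powr_mult powr_powr)
    have e1: "a0 * X - \<delta> * X - c0' * X = \<delta> * X" unfolding \<delta>_def by (simp add: field_simps)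
    have e2: "c1 * (M powr \<alpha> + 1) * m = c1 * m + B1 * (X + 1) powr a"
      unfolding Ma B1_def by (simp add: algebra_simps)
    have "\<delta> * (X + 1) \<le> B0 + B1 * (X + 1) powr a"
      using en e1 e2 unfolding B0_def by (simp add: algebra_simps)
    then have XB: "X + 1 \<le> Xb" unfolding Xb_def
      by (rule final_arith[OF \<delta> B0 B1 a(1) a(2), rotated]) (use X0 in simp)
    have C1: "W01p_norm \<Omega> p Du \<le> Xb powr (1/p)"
      unfolding W01p_norm_def X_def[symmetric] using X0 XB p1 by (intro powr_mono2) auto
    have C2: "AE x in lebesgue. x \<in> \<Omega> \<longrightarrow> \<bar>u x\<bar> \<le> Kc * Xb powr (1/p)"
      using AEu
    proof eventually_elim
      case (elim x)
      have "M \<le> Kc * Xb powr (1/p)" unfolding M_def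
        using Kc X0 XB p1 by (intro mult_left_mono powr_mono2) auto
      then show ?case using elim by auto
    qed
    show "W01p_norm \<Omega> p Du \<le> Xb powr (1/p) \<and> (AE x in lebesgue. x \<in> \<Omega> \<longrightarrow> \<bar>u x\<bar> \<le> Kc * Xb powr (1/p))"
      using C1 C2 by blast
  qed
  show ?thesis using main pos1 pos2 by blast
qed


end
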